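(* Let $(\mathcal{G},\kappa)$ be a reaction network with species $\mathcal{S}=\{S_1,\dots,S_n\}$ whose positive recurrent irreducible components are $\Gamma_l=\{x\in\mathbb{Z}^{\mathcal{S}}_{\ge0}\mid\sum_{i}x_i=l\}$, $l\in\mathcal{I}$, with stationary distributions $\pi_l$ that are strictly positive on $\Gamma_l$, where $\mathcal{I}=\mathbb{Z}_{\ge1}$. Then the following are equivalent: (1) $(\mathcal{G},\kappa)$ has product-form stationary distribution, i.e. there are functions $f_i:\mathbb{Z}_{\ge 0}\to\mathbb{R}_{>0}$ ($S_i\in\mathcal{S}$) with $\pi_l(x)=Z_l^{-1}\prod_i f_i(x_i)$ for all $l\in\mathcal{I}$, $x\in\Gamma_l$, where $Z_l=\sum_{x\in\Gamma_l}\prod_if_i(x_i)$; (2) (a) for all $i$ with $i,i+1\in\mathcal{I}$, all $j,k$, and all $x,x+e_j-e_k\in\Gamma_i$, $y,y+e_j-e_k\in\Gamma_{i+1}$ with $x_j=y_j$, $x_k=y_k$: $\pi_i(x+e_j-e_k)\pi_{i+1}(y)=\pi_{i+1}(y+e_j-e_k)\pi_i(x)$; and (b) for all $i$ with $i,i+1,i+2\in\mathcal{I}$, all $j,k$, and all $x,z\in\Gamma_i$, $x+e_j,y,z+e_k,w\in\Gamma_{i+1}$, $y+e_j,w+e_k\in\Gamma_{i+2}$ with $x_j=y_j$ and $z_k=w_k$: $\pi_{i+1}(x+e_j)\pi_{i+1}(y)\pi_{i+2}(w+e_k)\pi_i(z)=\pi_{i+1}(z+e_k)\pi_{i+1}(w)\pi_{i+2}(y+e_j)\pi_i(x)$.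 Moreover, if instead $\mathcal{I}=\mathbb{Z}_{\ge q}$ for some $q\ge2$ (all other hypotheses unchanged), then (1) implies (2).
   Context: A reaction network $\mathcal{G}$ with rates $\kappa$ has a continuous-time Markov chain on $\mathbb{Z}^n_{\ge0}$; an irreducible component is a nonempty set $\Gamma$ such that for $x\in\Gamma$, $u$ is reachable from $x$ iff $u\in\Gamma$; on a positive recurrent irreducible component the stationary distribution is unique. $e_i$ denotes the $i$-th standard basis vector. *)

theory Defs
  imports Complex_Main "HOL-Library.Function_Algebras"
begin

(* States: vectors in Z^S_{>=0}, represented as functions 's => int that are nonnegative.
   The species set S is the finite type 's. *)

type_synonym 's state = "'s \<Rightarrow> int"

definition nonneg :: "'s state \<Rightarrow> bool" where
  "nonneg x \<longleftrightarrow> (\<forall>s. 0 \<le> x s)"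

definition e :: "'s \<Rightarrow> 's state" where
  "e j = (\<lambda>s. if s = j then 1 else 0)"

definition Gam :: "nat \<Rightarrow> ('s::finite) state set" where
  "Gam l = {x. nonneg x \<and> (\<Sum>s\<in>UNIV. x s) = int l}"

definition network :: "('s state \<times> 's state) set \<Rightarrow> ('s state \<times> 's state \<Rightarrow> real) \<Rightarrow> bool" where
  "network R \<kappa> \<longleftrightarrow> finite R \<and>
     (\<forall>(y, y')\<in>R. nonneg y \<and> nonneg y' \<and> y \<noteq> y') \<and> (\<forall>r\<in>R. \<kappa> r > 0)"

(* stochastic mass-action intensity of reaction r = (y, y') at state x:
   kappa_r * prod_s x_s (x_s - 1) ... (x_s - y_s + 1) *)
definition intensity :: "('s::finite state \<times> 's state \<Rightarrow> real) \<Rightarrow> 's state \<times> 's state \<Rightarrow> 's state \<Rightarrow> real" where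
  "intensity \<kappa> r x = \<kappa> r * (\<Prod>s\<in>UNIV. \<Prod>t\<in>{0..<nat (fst r s)}. real_of_int (x s - int t))"

definition qrate :: "('s::finite state \<times> 's state) set \<Rightarrow> ('s state \<times> 's state \<Rightarrow> real) \<Rightarrow> 's state \<Rightarrow> 's state \<Rightarrow> real" where
  "qrate R \<kappa> x u = (\<Sum>r\<in>{r\<in>R. x + (snd r - fst r) = u}. intensity \<kappa> r x)"

definition step :: "('s::finite state \<times> 's state) set \<Rightarrow> ('s state \<times> 's state \<Rightarrow> real) \<Rightarrow> 's state \<Rightarrow> 's state \<Rightarrow> bool" where
  "step R \<kappa> x u \<longleftrightarrow> nonneg x \<and> u \<noteq> x \<and> qrate R \<kappa> x u > 0"

definition reachable :: "('s::finite state \<times> 's state) set \<Rightarrow> ('s state \<times> 's state \<Rightarrow> real) \<Rightarrow> 's state \<Rightarrow> 's state \<Rightarrow> bool" where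
  "reachable R \<kappa> = (step R \<kappa>)\<^sup>*\<^sup>*"

definition irreducible_component :: "('s::finite state \<times> 's state) set \<Rightarrow> ('s state \<times> 's state \<Rightarrow> real) \<Rightarrow> 's state set \<Rightarrow> bool" where
  "irreducible_component R \<kappa> \<Gamma> \<longleftrightarrow> \<Gamma> \<noteq> {} \<and> (\<forall>x\<in>\<Gamma>. nonneg x) \<and>
     (\<forall>x\<in>\<Gamma>. \<forall>u. reachable R \<kappa> x u \<longleftrightarrow> u \<in> \<Gamma>)"

definition stationary :: "('s::finite state \<times> 's state) set \<Rightarrow> ('s state \<times> 's state \<Rightarrow> real) \<Rightarrow> 's state set \<Rightarrow> ('s state \<Rightarrow> real) \<Rightarrow> bool" where
  "stationary R \<kappa> \<Gamma> \<pi> \<longleftrightarrow> (\<forall>x. 0 \<le> \<pi> x) \<and> (\<forall>x. x \<notin> \<Gamma> \<longrightarrow> \<pi> x = 0) \<and>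
     finite \<Gamma> \<and> (\<Sum>x\<in>\<Gamma>. \<pi> x) = 1 \<and>
     (\<forall>x\<in>\<Gamma>. \<pi> x * (\<Sum>r\<in>R. intensity \<kappa> r x) =
        (\<Sum>r\<in>R. \<pi> (x - (snd r - fst r)) * intensity \<kappa> r (x - (snd r - fst r))))"

(* standing hypotheses: (G, kappa) is a reaction network, and for every l in I,
   Gamma_l is an irreducible component carrying the stationary distribution pi l,
   which is strictly positive on Gamma_l (positive recurrence is automatic since
   Gamma_l is finite) *)
definition hyps :: "('s::finite state \<times> 's state) set \<Rightarrow> ('s state \<times> 's state \<Rightarrow> real) \<Rightarrow> (nat \<Rightarrow> 's state \<Rightarrow> real) \<Rightarrow> nat set \<Rightarrow> bool" where
  "hyps R \<kappa> \<pi> I \<longleftrightarrow> network R \<kappa> \<and>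
     (\<forall>l\<in>I. irreducible_component R \<kappa> (Gam l) \<and> stationary R \<kappa> (Gam l) (\<pi> l) \<and>
        (\<forall>x\<in>Gam l. \<pi> l x > 0))"

definition product_form :: "(nat \<Rightarrow> ('s::finite) state \<Rightarrow> real) \<Rightarrow> nat set \<Rightarrow> bool" where
  "product_form \<pi> I \<longleftrightarrow> (\<exists>f :: 's \<Rightarrow> nat \<Rightarrow> real. (\<forall>i n. f i n > 0) \<and>
     (\<forall>l\<in>I. \<forall>x\<in>Gam l.
        \<pi> l x = (\<Prod>i\<in>UNIV. f i (nat (x i))) / (\<Sum>z\<in>Gam l. \<Prod>i\<in>UNIV. f i (nat (z i)))))"

definition cond2a :: "(nat \<Rightarrow> ('s::finite) state \<Rightarrow> real) \<Rightarrow> nat set \<Rightarrow> bool" where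
  "cond2a \<pi> I \<longleftrightarrow> (\<forall>i. i \<in> I \<and> i + 1 \<in> I \<longrightarrow> (\<forall>j k x y.
     x \<in> Gam i \<and> x + e j - e k \<in> Gam i \<and> y \<in> Gam (i + 1) \<and> y + e j - e k \<in> Gam (i + 1) \<and>
     x j = y j \<and> x k = y k \<longrightarrow>
     \<pi> i (x + e j - e k) * \<pi> (i + 1) y = \<pi> (i + 1) (y + e j - e k) * \<pi> i x))"

definition cond2b :: "(nat \<Rightarrow> ('s::finite) state \<Rightarrow> real) \<Rightarrow> nat set \<Rightarrow> bool" where
  "cond2b \<pi> I \<longleftrightarrow> (\<forall>i. i \<in> I \<and> i + 1 \<in> I \<and> i + 2 \<in> I \<longrightarrow> (\<forall>j k x y z w.
     x \<in> Gam i \<and> z \<in> Gam i \<and> x + e j \<in> Gam (i + 1) \<and> y \<in> Gam (i + 1) \<and>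
     z + e k \<in> Gam (i + 1) \<and> w \<in> Gam (i + 1) \<and>
     y + e j \<in> Gam (i + 2) \<and> w + e k \<in> Gam (i + 2) \<and> x j = y j \<and> z k = w k \<longrightarrow>
     \<pi> (i + 1) (x + e j) * \<pi> (i + 1) y * \<pi> (i + 2) (w + e k) * \<pi> i z =
     \<pi> (i + 1) (z + e k) * \<pi> (i + 1) w * \<pi> (i + 2) (y + e j) * \<pi> i x))"

end

theory Submission
  imports Defs
begin

lemma sum_e[simp]: "(\<Sum>s\<in>UNIV. e (j::'s::finite) s) = (1::int)"
  by (simp add: e_def sum.delta')

lemma e_apply: "e j s = (if s = j then 1 else 0)"
  by (simp add: e_def sum.delta')

lemma Gam_iff: "x \<in> Gam l \<longleftrightarrow> (\<forall>s. 0 \<le> x s) \<and> (\<Sum>s\<in>UNIV. x s) = int l"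
  by (simp add: Gam_def nonneg_def)

lemma Gam_add_e: "x \<in> Gam l \<Longrightarrow> x + e j \<in> Gam (Suc l)"
  unfolding Gam_iff by (auto simp: sum.distrib e_apply)

lemma Gam_sub_e: "x \<in> Gam (Suc l) \<Longrightarrow> x j \<ge> 1 \<Longrightarrow> x - e j \<in> Gam l"
  unfolding Gam_iff by (auto simp: sum_subtractf e_apply)

lemma Gam_coord_le: "(x::'s::finite state) \<in> Gam l \<Longrightarrow> x j \<le> int l"
proof -
  assume "x \<in> Gam l"
  hence nn: "\<forall>s. 0 \<le> x s" and s: "(\<Sum>s\<in>UNIV. x s) = int l" by (auto simp: Gam_iff)
  have "x j \<le> (\<Sum>s\<in>UNIV. x s)" by (rule member_le_sum) (use nn in auto)
  thus ?thesis using s by simp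
qed

lemma Gam_exists_pos: "(x::'s::finite state) \<in> Gam (Suc l) \<Longrightarrow> \<exists>j. x j \<ge> 1"
proof (rule ccontr)
  assume a: "x \<in> Gam (Suc l)" "\<not> (\<exists>j. x j \<ge> 1)"
  hence "\<forall>s. x s = 0" by (auto simp: Gam_iff) (metis int_one_le_iff_zero_less order_le_less)
  thus False using a(1) by (simp add: Gam_iff)
qed

lemma Gam1: "(x::'s::finite state) \<in> Gam 1 \<Longrightarrow> \<exists>t. x = e t"
proof -
  assume a: "x \<in> Gam 1"
  then obtain t where t: "x t \<ge> 1" using Gam_exists_pos[of x 0] by auto
  have le: "x t \<le> 1" using Gam_coord_le[OF a] by simp
  have nn: "\<forall>s. 0 \<le> x s" using a by (simp add: Gam_iff)
  have "(\<Sum>s\<in>UNIV. x s) = x t + (\<Sum>s\<in>UNIV - {t}. x s)"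
    by (simp add: sum.remove)
  hence "(\<Sum>s\<in>UNIV - {t}. x s) = 0" using a t le by (simp add: Gam_iff)
  hence "\<forall>s\<in>UNIV - {t}. x s = 0" using nn by (subst (asm) sum_nonneg_eq_0_iff) auto
  hence "x = e t" using t le by (auto simp: e_apply fun_eq_iff)
  thus ?thesis by blast
qed

definition qp :: "'s \<Rightarrow> 's \<Rightarrow> nat \<Rightarrow> nat \<Rightarrow> 's state" where
  "qp j oj l a = (\<lambda>s. if s = j then int a else if s = oj then int l - int a else 0)"

lemma qp_j[simp]: "qp j oj l a j = int a"
  by (simp add: qp_def)

lemma qp_Gam: "oj \<noteq> j \<Longrightarrow> a \<le> l \<Longrightarrow> qp j oj l a \<in> (Gam l :: ('s::finite) state set)"
proof -
  assume h: "oj \<noteq> j" "a \<le> l"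
  have "qp j oj l a = (\<lambda>s. int a * e j s + (int l - int a) * e oj s)"
    using h by (auto simp: qp_def e_apply fun_eq_iff)
  hence "(\<Sum>s\<in>UNIV. qp j oj l a s) = int l"
    by (simp add: sum.distrib flip: sum_distrib_left)
  moreover have "\<forall>s. 0 \<le> qp j oj l a s" using h by (auto simp: qp_def)
  ultimately show ?thesis by (simp add: Gam_iff)
qed


definition PP :: "('s::finite \<Rightarrow> nat \<Rightarrow> real) \<Rightarrow> 's state \<Rightarrow> real" where
  "PP f x = (\<Prod>i\<in>UNIV. f i (nat (x i)))"

lemma pf_swap:
  assumes "\<forall>s. (x s = y s \<and> x' s = y' s) \<or> (x' s = x s \<and> y' s = y s)"
  shows "PP f x' * PP f y = PP f y' * PP f x"
proof -
  have "\<And>s. f s (nat (x' s)) * f s (nat (y s)) = f s (nat (y' s)) * f s (nat (x s))"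
    using assms by (metis mult.commute)
  thus ?thesis unfolding PP_def prod.distrib[symmetric] by (rule prod.cong[OF refl])
qed

lemma pf_implies_2:
  fixes \<pi> :: "nat \<Rightarrow> ('s::finite) state \<Rightarrow> real"
  assumes "product_form \<pi> I"
  shows "cond2a \<pi> I \<and> cond2b \<pi> I"
proof -
  obtain f where fpos: "\<forall>i n. f i n > 0" and
    pf: "\<forall>l\<in>I. \<forall>x\<in>Gam l. \<pi> l x = PP f x / (\<Sum>z\<in>Gam l. PP f z)"
    using assms unfolding product_form_def PP_def by blast
  define Z where "Z l = (\<Sum>z\<in>Gam l. PP f z)" for l
  have pf': "\<pi> l x = PP f x / Z l" if "l \<in> I" "x \<in> Gam l" for l x
    using pf that by (simp add: Z_def)
  have A: "cond2a \<pi> I"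
    unfolding cond2a_def
  proof (intro allI impI)
    fix i and j k :: 's and x y :: "'s state"
    assume i: "i \<in> I \<and> i + 1 \<in> I" and
      h: "x \<in> Gam i \<and> x + e j - e k \<in> Gam i \<and> y \<in> Gam (i + 1) \<and> y + e j - e k \<in> Gam (i + 1) \<and>
     x j = y j \<and> x k = y k"
    have sw: "PP f (x + e j - e k) * PP f y = PP f (y + e j - e k) * PP f x"
      by (rule pf_swap) (use h in \<open>auto simp: e_apply\<close>)
    have "\<pi> i (x + e j - e k) * \<pi> (i + 1) y = (PP f (x + e j - e k) * PP f y) / (Z i * Z (i+1))"
      using i h by (simp add: pf')
    also have "\<dots> = (PP f (y + e j - e k) * PP f x) / (Z i * Z (i+1))" using sw by simp
    also have "\<dots> = \<pi> (i + 1) (y + e j - e k) * \<pi> i x"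
      using i h by (simp add: pf' mult.commute)
    finally show "\<pi> i (x + e j - e k) * \<pi> (i + 1) y = \<pi> (i + 1) (y + e j - e k) * \<pi> i x" .
  qed
  have B: "cond2b \<pi> I"
    unfolding cond2b_def
  proof (intro allI impI)
    fix i and j k :: 's and x y z w :: "'s state"
    assume i: "i \<in> I \<and> i + 1 \<in> I \<and> i + 2 \<in> I" and
      h: "x \<in> Gam i \<and> z \<in> Gam i \<and> x + e j \<in> Gam (i + 1) \<and> y \<in> Gam (i + 1) \<and>
     z + e k \<in> Gam (i + 1) \<and> w \<in> Gam (i + 1) \<and>
     y + e j \<in> Gam (i + 2) \<and> w + e k \<in> Gam (i + 2) \<and> x j = y j \<and> z k = w k"
    have s1: "PP f (x + e j) * PP f y = PP f (y + e j) * PP f x"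
      by (rule pf_swap) (use h in \<open>auto simp: e_apply\<close>)
    have s2: "PP f (w + e k) * PP f z = PP f (z + e k) * PP f w"
      by (rule pf_swap) (use h in \<open>auto simp: e_apply\<close>)
    have "\<pi> (i + 1) (x + e j) * \<pi> (i + 1) y * \<pi> (i + 2) (w + e k) * \<pi> i z =
       (PP f (x + e j) * PP f y) * (PP f (w + e k) * PP f z) / (Z (i+1) * Z (i+1) * Z (i+2) * Z i)"
      using i h by (simp add: pf' mult_ac)
    also have "\<dots> = (PP f (y + e j) * PP f x) * (PP f (z + e k) * PP f w) / (Z (i+1) * Z (i+1) * Z (i+2) * Z i)"
      using s1 s2 by simp
    also have "\<dots> = \<pi> (i + 1) (z + e k) * \<pi> (i + 1) w * \<pi> (i + 2) (y + e j) * \<pi> i x"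
      using i h by (simp add: pf' mult_ac)
    finally show "\<pi> (i + 1) (x + e j) * \<pi> (i + 1) y * \<pi> (i + 2) (w + e k) * \<pi> i z =
     \<pi> (i + 1) (z + e k) * \<pi> (i + 1) w * \<pi> (i + 2) (y + e j) * \<pi> i x" .
  qed
  show ?thesis using A B by blast
qed


locale ctx =
  fixes \<pi> :: "nat \<Rightarrow> ('s::finite) state \<Rightarrow> real" and s0 s1 :: 's
  assumes neq: "s0 \<noteq> s1"
    and pos: "\<And>l x. l \<ge> 1 \<Longrightarrow> x \<in> Gam l \<Longrightarrow> \<pi> l x > 0"
    and c2b: "cond2b \<pi> {1..}"
begin

definition oth :: "'s \<Rightarrow> 's" where "oth j = (if j = s0 then s1 else s0)"

lemma oth_neq: "oth j \<noteq> j"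
  using neq by (auto simp: oth_def)

definition rho :: "nat \<Rightarrow> 's \<Rightarrow> 's state \<Rightarrow> real" where
  "rho l j x = \<pi> (Suc l) (x + e j) / \<pi> l x"

lemma rho_pos: "l \<ge> 1 \<Longrightarrow> x \<in> Gam l \<Longrightarrow> rho l j x > 0"
  unfolding rho_def using pos Gam_add_e by (metis divide_pos_pos le_SucI)

lemma main:
  fixes x y z w :: "'s state"
  assumes i: "i \<ge> 1" and h: "x \<in> Gam i" "z \<in> Gam i" "y \<in> Gam (Suc i)" "w \<in> Gam (Suc i)"
    "x j = y j" "z k = w k"
  shows "rho i j x * rho (Suc i) k w = rho i k z * rho (Suc i) j y"
proof -
  have m: "x + e j \<in> Gam (i + 1)" "z + e k \<in> Gam (i + 1)" "y + e j \<in> Gam (i + 2)"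
    "w + e k \<in> Gam (i + 2)" "y \<in> Gam (i + 1)" "w \<in> Gam (i + 1)"
    using h Gam_add_e by (auto simp: numeral_2_eq_2)
  have eq: "\<pi> (i + 1) (x + e j) * \<pi> (i + 1) y * \<pi> (i + 2) (w + e k) * \<pi> i z =
     \<pi> (i + 1) (z + e k) * \<pi> (i + 1) w * \<pi> (i + 2) (y + e j) * \<pi> i x"
    by (rule c2b[unfolded cond2b_def, rule_format]) (use i h m in auto)
  have p: "\<pi> i x > 0" "\<pi> i z > 0" "\<pi> (Suc i) y > 0" "\<pi> (Suc i) w > 0"
    using pos i h by auto
  have eq': "\<pi> (Suc i) (x + e j) * \<pi> (Suc i) y * \<pi> (Suc (Suc i)) (w + e k) * \<pi> i z =
     \<pi> (Suc i) (z + e k) * \<pi> (Suc i) w * \<pi> (Suc (Suc i)) (y + e j) * \<pi> i x"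
    using eq by (simp add: numeral_2_eq_2)
  show ?thesis unfolding rho_def using p eq'
    by (simp add: field_simps)
qed

lemma lemA:
  assumes "i \<ge> 1" "x \<in> Gam i" "x' \<in> Gam i" "x j = x' j"
  shows "rho i j x = rho i j x'"
proof -
  define y where "y = x + e (oth j)"
  have y: "y \<in> Gam (Suc i)" "x j = y j" "x' j = y j"
    using assms Gam_add_e[OF assms(2)] oth_neq[of j] by (auto simp: y_def e_apply)
  have "rho i j x * rho (Suc i) j y = rho i j x' * rho (Suc i) j y"
    using main[OF assms(1,2,3) y(1) y(1) y(2) y(3)] .
  moreover have "rho (Suc i) j y > 0" using rho_pos y by auto
  ultimately show ?thesis by simp
qed

definition Q :: "nat \<Rightarrow> 's state" where "Q l = qp s0 s1 l 0"

lemma Q_Gam: "Q l \<in> Gam l"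
  unfolding Q_def using qp_Gam neq by (metis le0)

lemma Q_s0: "Q l s0 = 0"
  by (simp add: Q_def)

fun gam :: "nat \<Rightarrow> real" where
  "gam 0 = 1"
| "gam (Suc l) = (if l = 0 then 1 else gam l * rho (Suc l) s0 (Q (Suc l)) / rho l s0 (Q l))"

lemma gam_pos: "gam l > 0"
proof (induction l)
  case 0 then show ?case by simp
next
  case (Suc l)
  show ?case
  proof (cases "l = 0")
    case False
    hence "rho (Suc l) s0 (Q (Suc l)) > 0" "rho l s0 (Q l) > 0"
      using rho_pos Q_Gam by auto
    thus ?thesis using Suc False by simp
  qed simp
qed

definition r :: "'s \<Rightarrow> nat \<Rightarrow> real" where
  "r j a = rho (max a 1) j (qp j (oth j) (max a 1) a) / gam (max a 1)"

lemma r_pos: "r j a > 0"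
proof -
  have "qp j (oth j) (max a 1) a \<in> Gam (max a 1)" using qp_Gam oth_neq by (metis max.cobounded1)
  thus ?thesis unfolding r_def using rho_pos gam_pos by (simp add: divide_pos_pos)
qed

lemma direct:
  assumes "l \<ge> 1" "x \<in> Gam l" "max (nat (x j)) 1 = l"
  shows "rho l j x = gam l * r j (nat (x j))"
proof -
  define a where "a = nat (x j)"
  have xj: "x j = int a" using assms(2) by (simp add: a_def Gam_iff)
  have q: "qp j (oth j) l a \<in> Gam l" using qp_Gam oth_neq assms(3) a_def by (metis max.cobounded1)
  have "rho l j x = rho l j (qp j (oth j) l a)"
    by (rule lemA) (use assms q xj in auto)
  thus ?thesis using gam_pos[of l] assms(3) unfolding r_def a_def[symmetric] by simp
qed

lemma K: "x \<in> Gam (Suc m) \<Longrightarrow> rho (Suc m) j x = gam (Suc m) * r j (nat (x j))"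
proof (induction m arbitrary: x)
  case 0
  have "x j \<le> 1" using Gam_coord_le[OF 0] by simp
  hence "max (nat (x j)) 1 = Suc 0" by simp
  thus ?case using direct 0 by simp
next
  case (Suc m)
  show ?case
  proof (cases "nat (x j) = Suc (Suc m)")
    case True
    thus ?thesis using direct Suc.prems by simp
  next
    case False
    define a where "a = nat (x j)"
    have "x j \<le> int (Suc (Suc m))" using Gam_coord_le[OF Suc.prems] .
    hence al: "a \<le> Suc m" using False a_def by simp
    have xj: "x j = int a" using Suc.prems by (simp add: a_def Gam_iff)
    define x' where "x' = qp j (oth j) (Suc m) a"
    have x': "x' \<in> Gam (Suc m)" using qp_Gam oth_neq al x'_def by metis
    have IH: "rho (Suc m) j x' = gam (Suc m) * r j a"
      using Suc.IH[OF x'] by (simp add: x'_def)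
    have M: "rho (Suc m) j x' * rho (Suc (Suc m)) s0 (Q (Suc (Suc m))) =
          rho (Suc m) s0 (Q (Suc m)) * rho (Suc (Suc m)) j x"
      by (rule main) (use x' Q_Gam Suc.prems xj x'_def Q_s0 in auto)
    have p: "rho (Suc m) s0 (Q (Suc m)) > 0" using rho_pos Q_Gam by auto
    have "rho (Suc (Suc m)) j x = rho (Suc m) j x' * rho (Suc (Suc m)) s0 (Q (Suc (Suc m))) / rho (Suc m) s0 (Q (Suc m))"
      using M p by (simp add: field_simps)
    also have "\<dots> = gam (Suc (Suc m)) * r j a" using IH by simp
    finally show ?thesis by (simp add: a_def)
  qed
qed

fun f :: "'s \<Rightarrow> nat \<Rightarrow> real" where
  "f j 0 = 1"
| "f j (Suc a) = f j a * r j a"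

lemma f_pos: "f j a > 0"
  by (induction a) (auto simp: r_pos)

lemma PP_add:
  assumes "\<forall>s. 0 \<le> x s"
  shows "PP f (x + e j) = PP f x * r j (nat (x j))"
proof -
  have B: "(\<Prod>i\<in>UNIV - {j}. f i (nat ((x + e j) i))) = (\<Prod>i\<in>UNIV - {j}. f i (nat (x i)))"
    by (rule prod.cong) (auto simp: e_apply)
  have A: "PP f (x + e j) = f j (nat ((x + e j) j)) * (\<Prod>i\<in>UNIV - {j}. f i (nat ((x + e j) i)))"
    unfolding PP_def by (rule prod.remove) auto
  have C: "nat ((x + e j) j) = Suc (nat (x j))"
    using assms[rule_format, of j] by (simp add: e_apply nat_add_distrib)
  have D: "PP f x = f j (nat (x j)) * (\<Prod>i\<in>UNIV - {j}. f i (nat (x i)))"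
    unfolding PP_def by (rule prod.remove) auto
  show ?thesis unfolding A B C D by simp
qed

fun Kc :: "nat \<Rightarrow> real" where
  "Kc 0 = 0"
| "Kc (Suc l) = (if l = 0 then \<pi> 1 (e s0) / r s0 0 else Kc l * gam l)"

lemma e_Gam1: "e (t::'s) \<in> Gam 1"
proof -
  have "(0::'s state) \<in> Gam 0" by (simp add: Gam_iff)
  from Gam_add_e[OF this, of t] show ?thesis by simp
qed

lemma piK: "x \<in> Gam (Suc m) \<Longrightarrow> \<pi> (Suc m) x = Kc (Suc m) * PP f x"
proof (induction m arbitrary: x)
  case 0
  then obtain t where t: "x = e t" using Gam1 by auto
  have PPe: "PP f (e t) = r t 0"
    using PP_add[of 0 t] by (simp add: PP_def)
  have rt: "r t 0 > 0" "r s0 0 > 0" using r_pos by auto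
  have "\<pi> 1 (e t) = \<pi> 1 (e s0) / r s0 0 * r t 0"
  proof (cases "t = s0")
    case True then show ?thesis using rt by simp
  next
    case False
    have S: "e s0 + e t \<in> Gam 2" using Gam_add_e[OF e_Gam1] by (simp add: numeral_2_eq_2)
    have qt: "qp t (oth t) 1 0 \<in> Gam 1" "qp s0 (oth s0) 1 0 \<in> Gam 1"
      using qp_Gam oth_neq by (metis zero_le)+
    have "r t 0 = rho 1 t (qp t (oth t) 1 0)" by (simp add: r_def)
    also have "\<dots> = rho 1 t (e s0)" by (rule lemA) (use qt e_Gam1 False in \<open>auto simp: e_apply\<close>)
    finally have r1: "r t 0 = \<pi> 2 (e s0 + e t) / \<pi> 1 (e s0)" by (simp add: rho_def numeral_2_eq_2)
    have "r s0 0 = rho 1 s0 (qp s0 (oth s0) 1 0)" by (simp add: r_def)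
    also have "\<dots> = rho 1 s0 (e t)" by (rule lemA) (use qt e_Gam1 False in \<open>auto simp: e_apply\<close>)
    finally have r2: "r s0 0 = \<pi> 2 (e s0 + e t) / \<pi> 1 (e t)" by (simp add: rho_def numeral_2_eq_2 add.commute)
    have "\<pi> 2 (e s0 + e t) > 0" "\<pi> 1 (e s0) > 0" "\<pi> 1 (e t) > 0" using pos S e_Gam1 by auto
    thus ?thesis using r1 r2 rt by (simp add: field_simps)
  qed
  thus ?case using t PPe by simp
next
  case (Suc m)
  obtain j where j: "x j \<ge> 1" using Gam_exists_pos[OF Suc.prems] by auto
  define x' where "x' = x - e j"
  have x': "x' \<in> Gam (Suc m)" using Gam_sub_e[OF Suc.prems j] x'_def by simp
  have xx: "x = x' + e j" by (simp add: x'_def)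
  have nn: "\<forall>s. 0 \<le> x' s" using x' by (simp add: Gam_iff)
  have px: "\<pi> (Suc m) x' > 0" using pos x' by simp
  have "\<pi> (Suc (Suc m)) x = rho (Suc m) j x' * \<pi> (Suc m) x'"
    using px by (simp add: rho_def xx)
  also have "\<dots> = gam (Suc m) * r j (nat (x' j)) * (Kc (Suc m) * PP f x')"
    using K[OF x'] Suc.IH[OF x'] by simp
  also have "\<dots> = Kc (Suc (Suc m)) * PP f x"
    using PP_add[OF nn, of j] xx by simp
  finally show ?case .
qed

lemma pf:
  assumes sums: "\<And>l. l \<ge> 1 \<Longrightarrow> (\<Sum>x\<in>Gam l. \<pi> l x) = 1"
  shows "product_form \<pi> {1..}"
proof -
  have H: "\<pi> l x = PP f x / (\<Sum>z\<in>Gam l. PP f z)" if l: "l \<ge> 1" and x: "x \<in> Gam l" for l x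
  proof -
    obtain m where m: "l = Suc m" using l by (cases l) auto
    have "1 = (\<Sum>z\<in>Gam l. \<pi> l z)" using sums[OF l] by simp
    also have "\<dots> = (\<Sum>z\<in>Gam l. Kc l * PP f z)"
      by (rule sum.cong[OF refl]) (simp add: m piK)
    also have "\<dots> = Kc l * (\<Sum>z\<in>Gam l. PP f z)" by (rule sum_distrib_left[symmetric])
    finally have k: "Kc l * (\<Sum>z\<in>Gam l. PP f z) = 1" by simp
    hence S0: "(\<Sum>z\<in>Gam l. PP f z) \<noteq> 0" by auto
    have kk: "Kc l = 1 / (\<Sum>z\<in>Gam l. PP f z)" using k S0 by (simp add: eq_divide_eq)
    have "\<pi> l x = Kc l * PP f x" using piK x unfolding m by blast
    thus ?thesis unfolding kk by simp
  qed
  have H': "\<forall>l\<in>{1..}. \<forall>x\<in>Gam l. \<pi> l x = (\<Prod>i\<in>UNIV. f i (nat (x i))) / (\<Sum>z\<in>Gam l. \<Prod>i\<in>UNIV. f i (nat (z i)))"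
    using H unfolding PP_def by auto
  show ?thesis unfolding product_form_def
    by (rule exI[of _ f]) (use f_pos H' in blast)
qed

end


lemma one_species_pf:
  fixes \<pi> :: "nat \<Rightarrow> ('s::finite) state \<Rightarrow> real"
  assumes one: "\<forall>a b::'s. a = b"
    and sums: "\<And>l. l \<in> I \<Longrightarrow> (\<Sum>x\<in>Gam l. \<pi> l x) = 1"
  shows "product_form \<pi> I"
proof -
  have U: "(UNIV :: 's set) = {s}" for s by (rule UNIV_eq_I) (metis one singletonI)
  have v: "y s = int l" if "y \<in> Gam l" for l and y :: "'s state" and s
  proof -
    have "(\<Sum>t\<in>UNIV. y t) = int l" using that by (simp add: Gam_iff)
    thus ?thesis unfolding U[of s] by simp
  qed
  have single: "Gam l = {x}" if "x \<in> Gam l" for l and x :: "'s state"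
  proof -
    have "y = x" if "y \<in> Gam l" for y
    proof
      fix s show "y s = x s" using v[OF that, of s] v[OF \<open>x \<in> Gam l\<close>, of s] by simp
    qed
    thus ?thesis using that by blast
  qed
  have H: "\<pi> l x = (\<Prod>i\<in>UNIV. (1::real)) / (\<Sum>z\<in>(Gam l :: 's state set). \<Prod>i\<in>(UNIV::'s set). (1::real))"
    if "l \<in> I" "x \<in> Gam l" for l x
  proof -
    have "\<pi> l x = 1" using sums[OF that(1)] unfolding single[OF that(2)] by simp
    thus ?thesis using single[OF that(2)] by simp
  qed
  show ?thesis unfolding product_form_def
    apply (rule exI[of _ "\<lambda>_ _. 1"])
    using H by simp
qed

theorem theorem3p6:
  shows "(\<forall>(R :: (('s::finite) state \<times> 's state) set) \<kappa> \<pi>. hyps R \<kappa> \<pi> {1..} \<longrightarrow>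
            (product_form \<pi> {1..} \<longleftrightarrow> cond2a \<pi> {1..} \<and> cond2b \<pi> {1..})) \<and>
         (\<forall>q (R :: ('s state \<times> 's state) set) \<kappa> \<pi>. q \<ge> 2 \<and> hyps R \<kappa> \<pi> {q..} \<longrightarrow>
            product_form \<pi> {q..} \<longrightarrow> cond2a \<pi> {q..} \<and> cond2b \<pi> {q..})"
proof (rule conjI, goal_cases)
  case 1
  show ?case
  proof (intro allI impI)
  fix R :: "('s state \<times> 's state) set" and \<kappa> and \<pi> :: "nat \<Rightarrow> 's state \<Rightarrow> real"
  assume h: "hyps R \<kappa> \<pi> {1..}"
  have sums: "(\<Sum>x\<in>Gam l. \<pi> l x) = 1" if "l \<in> {1..}" for l
    using h that unfolding hyps_def stationary_def by blast
  have pos: "\<pi> l x > 0" if "l \<ge> 1" "x \<in> Gam l" for l x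
    using h that unfolding hyps_def by auto
  show "product_form \<pi> {1..} \<longleftrightarrow> cond2a \<pi> {1..} \<and> cond2b \<pi> {1..}"
  proof
    assume "product_form \<pi> {1..}"
    thus "cond2a \<pi> {1..} \<and> cond2b \<pi> {1..}" by (rule pf_implies_2)
  next
    assume c: "cond2a \<pi> {1..} \<and> cond2b \<pi> {1..}"
    show "product_form \<pi> {1..}"
    proof (cases "\<exists>s0 s1::'s. s0 \<noteq> s1")
      case True
      then obtain s0 s1 :: 's where n: "s0 \<noteq> s1" by blast
      interpret ctx \<pi> s0 s1
        by unfold_locales (use n pos c in auto)
      show ?thesis by (rule pf) (use sums in auto)
    next
      case False
      thus ?thesis using one_species_pf[where \<pi>=\<pi> and I="{1..}"] sums by blast
    qed
  qed
  qed
next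
  case 2
  show ?case using pf_implies_2 by blast
qed

end
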